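(* For every $d\in\mathbb{N}$, $\mathcal{NN}_{\mathrm{LReLU}}(d,d,d)$ compactly approximates $\mathcal{S}^\infty_c(\mathbb{R}^d)$: for every $\tau\in\mathcal{S}^\infty_c(\mathbb{R}^d)$, every compact $K\subset\mathbb{R}^d$ and every $\epsilon>0$ there exists $g\in\mathcal{NN}_{\mathrm{LReLU}}(d,d,d)$ with $\sup_{x\in K}\|\tau(x)-g(x)\|_\infty<\epsilon$.
   Context: For $\beta\in\mathbb{R}$, $\mathrm{LReLU}_\beta(x)=x$ if $x\ge 0$ and $\beta x$ if $x<0$, applied componentwise to vectors. $\mathcal{NN}_{\mathrm{LReLU}}(d,d,d)$ is the set of all maps $W_{N+1}\circ\mathrm{LReLU}_{\beta_N}\circ W_N\circ\cdots\circ\mathrm{LReLU}_{\beta_1}\circ W_1:\mathbb{R}^d\to\mathbb{R}^d$ with $N\in\mathbb{N}_0$, $\beta_i\in\mathbb{R}$, integers $1\le d_1,\dots,d_N\le d$, $d_0=d_{N+1}=d$, and $W_i:\mathbb{R}^{d_{i-1}}\to\mathbb{R}^{d_i}$ affine. A diffeomorphism $f:\mathbb{R}^d\to\mathbb{R}^d$ is compactly supported if there is a compact $K$ with $f(x)=x$ for all $x\notin K$. $\mathcal{S}^\infty_c(\mathbb{R}^d)$ is the set of compactly supported $C^\infty$-diffeomorphisms $\tau$ of $\mathbb{R}^d$ of the form $\tau(x)=(x_1,\dots,x_{d-1},\tau_d(x))$ for some continuous $\tau_d:\mathbb{R}^d\to\mathbb{R}$. *)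

theory Defs
  imports "HOL-Analysis.Analysis"
begin

definition lrelu :: "real \<Rightarrow> real \<Rightarrow> real" where
  "lrelu \<beta> t = (if t \<ge> 0 then t else \<beta> * t)"

text \<open>Hidden states of width m are vectors in R^m, represented as functions
  nat => real whose coordinates 0..m-1 are the entries (coordinates >= m are 0).
  The input and output space R^d is real^'n with d = CARD('n).\<close>

text \<open>layered d m f: f : R^d -> R^m is of the form
  LReLU_{beta_k} o W_k o ... o LReLU_{beta_1} o W_1 with k >= 1,
  all widths between 1 and d = CARD('n).\<close>
inductive layered :: "nat \<Rightarrow> (real^'n \<Rightarrow> (nat \<Rightarrow> real)) \<Rightarrow> bool" where
  first: "1 \<le> m \<Longrightarrow> m \<le> CARD('n) \<Longrightarrow>
    layered m (\<lambda>x::real^'n. \<lambda>i. if i < m then lrelu \<beta> (b i + (\<Sum>j\<in>UNIV. A i j * x $ j)) else 0)"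
| step: "layered m f \<Longrightarrow> 1 \<le> n \<Longrightarrow> n \<le> CARD('n) \<Longrightarrow>
    layered n (\<lambda>x::real^'n. \<lambda>i. if i < n then lrelu \<beta> (b i + (\<Sum>j<m. A i j * f x j)) else 0)"

definition NN_LReLU :: "(real^'n \<Rightarrow> real^'n) set" where
  "NN_LReLU =
     {g. \<exists>(A::'n \<Rightarrow> 'n \<Rightarrow> real) (b::'n \<Rightarrow> real).
            g = (\<lambda>x. \<chi> i. b i + (\<Sum>j\<in>UNIV. A i j * x $ j))}
   \<union> {g. \<exists>m f (B::'n \<Rightarrow> nat \<Rightarrow> real) (c::'n \<Rightarrow> real). layered m f \<and>
            g = (\<lambda>x. \<chi> i. c i + (\<Sum>j<m. B i j * f x j))}"

text \<open>C^infinity real-valued functions: differentiable everywhere, and all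
  partial derivatives again C^infinity (greatest fixed point = all orders).\<close>
coinductive smooth_real :: "('a::euclidean_space \<Rightarrow> real) \<Rightarrow> bool" where
  "(\<forall>x. g differentiable (at x)) \<Longrightarrow>
   (\<forall>i\<in>Basis. smooth_real (\<lambda>x. frechet_derivative g (at x) i)) \<Longrightarrow> smooth_real g"

definition smooth :: "('a::euclidean_space \<Rightarrow> 'b::euclidean_space) \<Rightarrow> bool" where
  "smooth f \<longleftrightarrow> (\<forall>b\<in>Basis. smooth_real (\<lambda>x. f x \<bullet> b))"

definition smooth_diffeo :: "('a::euclidean_space \<Rightarrow> 'a) \<Rightarrow> bool" where
  "smooth_diffeo f \<longleftrightarrow> bij f \<and> smooth f \<and> smooth (inv f)"

definition compactly_supported :: "('a::euclidean_space \<Rightarrow> 'a) \<Rightarrow> bool" where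
  "compactly_supported f \<longleftrightarrow> (\<exists>K. compact K \<and> (\<forall>x. x \<notin> K \<longrightarrow> f x = x))"

text \<open>S^infinity_c(R^d): the last coordinate is the greatest index of 'n.\<close>
definition S_inf_c :: "(real^'n::{finite,linorder} \<Rightarrow> real^'n::{finite,linorder}) set" where
  "S_inf_c = {\<tau>. smooth_diffeo \<tau> \<and> compactly_supported \<tau> \<and>
     (\<exists>\<tau>d::real^'n::{finite,linorder} \<Rightarrow> real. continuous_on UNIV \<tau>d \<and>
        (\<forall>x. \<tau> x = (\<chi> i. if i = Max (UNIV::'n::{finite,linorder} set) then \<tau>d x else x $ i)))}"

end

theory Submission
  imports Defs
begin


lemma NN_affI: "g = (\<lambda>x. \<chi> i. b i + (\<Sum>j\<in>UNIV. A i j * x $ j)) \<Longrightarrow> g \<in> NN_LReLU"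
  unfolding NN_LReLU_def by blast

lemma NN_layI: "layered m f \<Longrightarrow> g = (\<lambda>x. \<chi> i. c i + (\<Sum>j<m. B i j * f x j)) \<Longrightarrow> g \<in> NN_LReLU"
  unfolding NN_LReLU_def by blast

lemma NN_cases:
  assumes "g \<in> NN_LReLU"
  obtains A b where "g = (\<lambda>x. \<chi> i. b i + (\<Sum>j\<in>UNIV. A i j * x $ j))"
  | m f B c where "layered m f" "g = (\<lambda>x. \<chi> i. c i + (\<Sum>j<m. B i j * f x j))"
  using assms unfolding NN_LReLU_def by blast

lemma layered_eq: "layered m f \<Longrightarrow> f = g \<Longrightarrow> layered m g" by simp

lemma sum_aff_aux:
  fixes A :: "'a \<Rightarrow> 'b \<Rightarrow> real"
  assumes "finite J" "finite Kk"
  shows "(\<Sum>j\<in>J. A i j * (c j + (\<Sum>k\<in>Kk. B j k * y k)))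
     = (\<Sum>j\<in>J. A i j * c j) + (\<Sum>k\<in>Kk. (\<Sum>j\<in>J. A i j * B j k) * y k)"
proof -
  have "(\<Sum>j\<in>J. A i j * (c j + (\<Sum>k\<in>Kk. B j k * y k)))
     = (\<Sum>j\<in>J. A i j * c j) + (\<Sum>j\<in>J. \<Sum>k\<in>Kk. A i j * (B j k * y k))"
    by (simp add: distrib_left sum.distrib sum_distrib_left)
  also have "(\<Sum>j\<in>J. \<Sum>k\<in>Kk. A i j * (B j k * y k)) = (\<Sum>k\<in>Kk. (\<Sum>j\<in>J. A i j * B j k) * y k)"
    by (subst sum.swap) (simp add: sum_distrib_right mult.assoc)
  finally show ?thesis .
qed

lemma layered_comp:
  fixes f :: "real^'n::finite \<Rightarrow> nat \<Rightarrow> real"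
  assumes "layered m f" and h: "h \<in> NN_LReLU"
  shows "layered m (\<lambda>x. f (h x))"
  using assms(1)
proof (induction rule: layered.induct)
  case (first m \<beta> b A)
  from h show ?case
  proof (cases rule: NN_cases)
    fix A' b' assume hh: "h = (\<lambda>x. \<chi> i. b' i + (\<Sum>j\<in>UNIV. A' i j * x $ j))"
    have L: "layered m (\<lambda>x::real^'n. \<lambda>i. if i < m then lrelu \<beta> ((b i + (\<Sum>j\<in>UNIV. A i j * b' j)) + (\<Sum>k\<in>UNIV. (\<Sum>j\<in>UNIV. A i j * A' j k) * x $ k)) else 0)"
      by (rule layered.first) (use first in auto)
    have e: "(\<Sum>j\<in>UNIV. A i j * (b' j + (\<Sum>k\<in>UNIV. A' j k * x $ k))) = (\<Sum>j\<in>UNIV. A i j * b' j) + (\<Sum>k\<in>UNIV. (\<Sum>j\<in>UNIV. A i j * A' j k) * x $ k)" for i x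
      by (rule sum_aff_aux) auto
    show ?thesis by (rule layered_eq[OF L]) (intro ext; simp add: hh e add.assoc)
  next
    fix m' f' B c assume l: "layered m' f'" and hh: "h = (\<lambda>x. \<chi> i. c i + (\<Sum>j<m'. B i j * f' x j))"
    have L: "layered m (\<lambda>x::real^'n. \<lambda>i. if i < m then lrelu \<beta> ((b i + (\<Sum>j\<in>UNIV. A i j * c j)) + (\<Sum>k<m'. (\<Sum>j\<in>UNIV. A i j * B j k) * f' x k)) else 0)"
      by (rule layered.step[OF l]) (use first in auto)
    have e: "(\<Sum>j\<in>UNIV. A i j * (c j + (\<Sum>k<m'. B j k * f' x k))) = (\<Sum>j\<in>UNIV. A i j * c j) + (\<Sum>k<m'. (\<Sum>j\<in>UNIV. A i j * B j k) * f' x k)" for i x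
      by (rule sum_aff_aux) auto
    show ?thesis by (rule layered_eq[OF L]) (intro ext; simp add: hh e add.assoc)
  qed
next
  case (step m f n \<beta> b A)
  show ?case using layered.step[OF step.IH step.hyps(2,3), of \<beta> b A] by simp
qed

lemma NN_comp:
  fixes g h :: "real^'n::finite \<Rightarrow> real^'n"
  assumes g: "g \<in> NN_LReLU" and h: "h \<in> NN_LReLU"
  shows "(\<lambda>x. g (h x)) \<in> NN_LReLU"
  using g
proof (cases rule: NN_cases)
  fix A b assume gg: "g = (\<lambda>x::real^'n. \<chi> i. b i + (\<Sum>j\<in>UNIV. A i j * x $ j))"
  from h show ?thesis
  proof (cases rule: NN_cases)
    fix A' b' assume hh: "h = (\<lambda>x. \<chi> i. b' i + (\<Sum>j\<in>UNIV. A' i j * x $ j))"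
    have e: "(\<Sum>j\<in>UNIV. A i j * (b' j + (\<Sum>k\<in>UNIV. A' j k * x $ k))) = (\<Sum>j\<in>UNIV. A i j * b' j) + (\<Sum>k\<in>UNIV. (\<Sum>j\<in>UNIV. A i j * A' j k) * x $ k)" for i x
      by (rule sum_aff_aux) auto
    show "(\<lambda>x. g (h x)) \<in> NN_LReLU"
      by (rule NN_affI[where b="\<lambda>i. b i + (\<Sum>j\<in>UNIV. A i j * b' j)" and A="\<lambda>i k. \<Sum>j\<in>UNIV. A i j * A' j k"]) (intro ext; simp add: gg hh e add.assoc)
  next
    fix m' f' B c assume l: "layered m' f'" and hh: "h = (\<lambda>x. \<chi> i. c i + (\<Sum>j<m'. B i j * f' x j))"
    have e: "(\<Sum>j\<in>UNIV. A i j * (c j + (\<Sum>k<m'. B j k * f' x k))) = (\<Sum>j\<in>UNIV. A i j * c j) + (\<Sum>k<m'. (\<Sum>j\<in>UNIV. A i j * B j k) * f' x k)" for i x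
      by (rule sum_aff_aux) auto
    show "(\<lambda>x. g (h x)) \<in> NN_LReLU"
      by (rule NN_layI[OF l, where c="\<lambda>i. b i + (\<Sum>j\<in>UNIV. A i j * c j)" and B="\<lambda>i k. \<Sum>j\<in>UNIV. A i j * B j k"]) (intro ext; simp add: gg hh e add.assoc)
  qed
next
  fix m f B c assume l: "layered m f" and gg: "g = (\<lambda>x. \<chi> i. c i + (\<Sum>j<m. B i j * f x j))"
  have "layered m (\<lambda>x. f (h x))" by (rule layered_comp[OF l h])
  then show "(\<lambda>x. g (h x)) \<in> NN_LReLU"
    by (rule NN_layI) (simp add: gg)
qed

definition Lam :: "real \<Rightarrow> real^'n \<Rightarrow> real^'n::finite" where
  "Lam \<beta> = (\<lambda>x. \<chi> i. lrelu \<beta> (x$i))"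

lemma Lam_NN: "Lam \<beta> \<in> (NN_LReLU :: (real^'n::finite \<Rightarrow> _) set)"
proof -
  obtain idx :: "'n \<Rightarrow> nat" where bij: "bij_betw idx UNIV {0..<CARD('n)}"
    using ex_bij_betw_finite_nat[of "UNIV::'n set"] by auto
  have inj: "inj idx" using bij bij_betw_def by blast
  have idxlt: "idx i < CARD('n)" for i using bij bij_betw_apply by fastforce
  define m where "m = CARD('n)"
  have m1: "1 \<le> m" "m \<le> CARD('n)" unfolding m_def by (auto simp: Suc_le_eq)
  define f where "f = (\<lambda>x::real^'n. \<lambda>i. if i < m then lrelu \<beta> ((\<lambda>_. 0) i + (\<Sum>j\<in>UNIV. (\<lambda>i j. if i = idx j then 1 else 0) i j * x $ j)) else 0)"
  have l: "layered m f" unfolding f_def by (rule layered.first[OF m1])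
  have fx: "f x (idx i) = lrelu \<beta> (x$i)" for x i
  proof -
    have "(\<Sum>j\<in>UNIV. (if idx i = idx j then 1 else 0) * x $ j) = (\<Sum>j\<in>UNIV. (if i = j then x$j else 0))"
      by (rule sum.cong) (auto simp: inj inj_eq)
    then show ?thesis unfolding f_def using idxlt[of i] m_def by simp
  qed
  have "(\<Sum>j<m. (if j = idx i then 1 else 0) * f x j) = (\<Sum>j<m. if j = idx i then f x j else 0)" for i x
    by (rule sum.cong) auto
  also have "... i x = f x (idx i)" for i x
    using idxlt[of i] by (simp add: m_def)
  finally have s: "(\<Sum>j<m. (if j = idx i then 1 else 0) * f x j) = f x (idx i)" for i x .
  show ?thesis
    by (rule NN_layI[OF l, where c="\<lambda>_. 0" and B="\<lambda>i j. if j = idx i then 1 else 0"])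
       (auto simp: Lam_def s fx)
qed



definition realz :: "(real^'n \<Rightarrow> real^'n::finite) \<Rightarrow> bool" where
  "realz T \<longleftrightarrow> continuous_on UNIV T \<and> (\<forall>S. compact S \<longrightarrow> (\<exists>g\<in>NN_LReLU. \<forall>x\<in>S. g x = T x))"

lemma realz_comp:
  assumes "realz T1" "realz T2"
  shows "realz (\<lambda>x. T2 (T1 x))"
  unfolding realz_def
proof (intro conjI allI impI)
  show "continuous_on UNIV (\<lambda>x. T2 (T1 x))"
    using assms unfolding realz_def by (auto intro: continuous_on_compose2)
next
  fix S :: "(real^'a) set" assume S: "compact S"
  obtain g1 where g1: "g1 \<in> NN_LReLU" "\<forall>x\<in>S. g1 x = T1 x" using assms(1) S unfolding realz_def by blast
  have "compact (T1 ` S)" using assms(1) S unfolding realz_def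
    by (auto intro: compact_continuous_image continuous_on_subset)
  then obtain g2 where g2: "g2 \<in> NN_LReLU" "\<forall>x\<in>T1 ` S. g2 x = T2 x" using assms(2) unfolding realz_def by blast
  show "\<exists>g\<in>NN_LReLU. \<forall>x\<in>S. g x = T2 (T1 x)"
    by (rule bexI[of _ "\<lambda>x. g2 (g1 x)"]) (use g1 g2 NN_comp in auto)
qed

lemma realz_affI:
  assumes "\<And>x. T x = (\<chi> i. b i + (\<Sum>j\<in>UNIV. A i j * x$j))"
  shows "realz T"
proof -
  have T: "T = (\<lambda>x. \<chi> i. b i + (\<Sum>j\<in>UNIV. A i j * x$j))" using assms by auto
  show ?thesis unfolding realz_def T
    by (auto intro!: continuous_intros NN_affI)
qed

definition setc :: "'n \<Rightarrow> real^'n \<Rightarrow> real \<Rightarrow> real^'n::finite" where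
  "setc k x v = (\<chi> i. if i = k then v else x$i)"

lemma setc_nth[simp]: "setc k x v $ i = (if i = k then v else x$i)"
  by (simp add: setc_def)

lemma setc_same[simp]: "setc k x (x$k) = x"
  by (simp add: setc_def vec_eq_iff)

lemma setc_setc[simp]: "setc k (setc k x v) w = setc k x w"
  by (simp add: setc_def vec_eq_iff)

lemma setc_nth_same[simp]: "setc k x v $ k = v" by simp

lemma sum_setc:
  "(\<Sum>j\<in>UNIV. a j * setc k x v $ j) = (\<Sum>j\<in>UNIV. a j * x$j) + a k * (v - x$k)"
proof -
  have "(\<Sum>j\<in>UNIV. a j * setc k x v $ j) = (\<Sum>j\<in>UNIV. a j * x$j + (if j = k then a k * (v - x$k) else 0))"
    by (rule sum.cong) (auto simp: algebra_simps)
  also have "\<dots> = (\<Sum>j\<in>UNIV. a j * x$j) + a k * (v - x$k)"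
    by (simp add: sum.distrib)
  finally show ?thesis .
qed

lemma sum_delta_mult: "(\<Sum>j\<in>UNIV. (if i = j then 1 else 0) * (x::real^'n::finite)$j) = x$i"
proof -
  have "(\<Sum>j\<in>UNIV. (if i = j then 1 else 0) * x$j) = (\<Sum>j\<in>UNIV. if i = j then x$j else 0)"
    by (rule sum.cong) auto
  then show ?thesis by simp
qed

lemma sum_delta_gen: "(\<Sum>j\<in>UNIV. (if i = j then 1 else 0) * (f j::real)) = f (i::'n::finite)"
proof -
  have "(\<Sum>j\<in>UNIV. (if i = j then 1 else 0) * f j) = (\<Sum>j\<in>UNIV. if i = j then f j else 0)"
    by (rule sum.cong) auto
  then show ?thesis by simp
qed

lemma aff_shift_nth[simp]: "(\<chi> i. s i + (\<Sum>j\<in>UNIV. (if i = j then 1 else 0) * (x::real^'n::finite)$j)) $ i = s i + x$i"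
  by (simp only: vec_lambda_beta sum_delta_mult)

lemma realz_upd: "realz (\<lambda>x. setc k x (c + (\<Sum>j\<in>UNIV. a j * x$j)))"
proof (rule realz_affI[where b="\<lambda>i. if i = k then c else 0" and A="\<lambda>i j. if i = k then a j else if i = j then 1 else 0"])
  fix x :: "real^'a"
  show "setc k x (c + (\<Sum>j\<in>UNIV. a j * x $ j)) =
         (\<chi> i. (if i = k then c else 0) + (\<Sum>j\<in>UNIV. (if i = k then a j else if i = j then 1 else 0) * x $ j))"
    unfolding vec_eq_iff
  proof
    fix i show "setc k x (c + (\<Sum>j\<in>UNIV. a j * x $ j)) $ i =
         (\<chi> i. (if i = k then c else 0) + (\<Sum>j\<in>UNIV. (if i = k then a j else if i = j then 1 else 0) * x $ j)) $ i"
      by (cases "i = k") (simp_all add: sum_delta_mult)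
  qed
qed

lemma lrelu_alt: "lrelu \<beta> = (\<lambda>t. max t 0 + \<beta> * min t 0)"
  by (auto simp: lrelu_def fun_eq_iff)

lemma continuous_on_lrelu[continuous_intros]:
  "continuous_on S f \<Longrightarrow> continuous_on S (\<lambda>x. lrelu \<beta> (f x))"
  unfolding lrelu_alt by (intro continuous_intros)

lemma lrelu_nonneg[simp]: "t \<ge> 0 \<Longrightarrow> lrelu \<beta> t = t" by (simp add: lrelu_def)

lemma lrelu_inv: "\<beta> > 0 \<Longrightarrow> lrelu (1/\<beta>) (lrelu \<beta> t) = t"
  by (auto simp: lrelu_def mult_le_0_iff zero_le_mult_iff)

lemma bounded_coords:
  assumes "compact (S::(real^'n::finite) set)"
  obtains C where "C \<ge> 0" "\<And>x i. x \<in> S \<Longrightarrow> \<bar>x$i\<bar> \<le> C"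
proof -
  have "bounded S" using compact_imp_bounded[OF assms] .
  then obtain C where C0: "\<forall>x\<in>S. norm x \<le> C" unfolding bounded_iff by (elim exE)
  then have C: "\<And>x. x \<in> S \<Longrightarrow> norm x \<le> C" by simp
  show ?thesis
  proof (rule that[of "max C 0"])
    fix x i assume "x \<in> S"
    then show "\<bar>x$i\<bar> \<le> max C 0" using component_le_norm_cart[of x i] C[of x] by linarith
  qed simp
qed

lemma realz_coord: "realz (\<lambda>x. setc k x (lrelu \<beta> (x$k)))"
  unfolding realz_def
proof (intro conjI allI impI)
  show "continuous_on UNIV (\<lambda>x. setc k x (lrelu \<beta> (x$k)))"
    unfolding setc_def
  proof (rule continuous_on_vec_lambda)
    fix i show "continuous_on UNIV (\<lambda>x::real^'a. if i = k then lrelu \<beta> (x $ k) else x $ i)"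
    proof (cases "i = k")
      case True then show ?thesis by (simp add: continuous_on_lrelu continuous_on_component continuous_on_id)
    next
      case False then show ?thesis by (simp add: continuous_on_component continuous_on_id)
    qed
  qed
next
  fix S :: "(real^'a) set" assume S: "compact S"
  obtain C where C: "C \<ge> 0" "\<And>x i. x \<in> S \<Longrightarrow> \<bar>x$i\<bar> \<le> C" using bounded_coords[OF S] by blast
  define A1 where "A1 = (\<lambda>x::real^'a. \<chi> i. (if i = k then 0 else C) + (\<Sum>j\<in>UNIV. (if i = j then 1 else 0) * x$j))"
  define A2 where "A2 = (\<lambda>x::real^'a. \<chi> i. (if i = k then 0 else -C) + (\<Sum>j\<in>UNIV. (if i = j then 1 else 0) * x$j))"
  have n1: "A1 \<in> NN_LReLU" unfolding A1_def by (rule NN_affI) (rule refl)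
  have n2: "A2 \<in> NN_LReLU" unfolding A2_def by (rule NN_affI) (rule refl)
  have g: "(\<lambda>x. A2 (Lam \<beta> (A1 x))) \<in> NN_LReLU"
    by (rule NN_comp[OF n2 NN_comp[OF Lam_NN n1]])
  have "A2 (Lam \<beta> (A1 x)) = setc k x (lrelu \<beta> (x$k))" if x: "x \<in> S" for x
  proof -
    have "x$i + C \<ge> 0" for i using C(2)[OF x, of i] by linarith
    then show ?thesis
      unfolding vec_eq_iff
    proof (intro allI)
      fix i show "A2 (Lam \<beta> (A1 x)) $ i = setc k x (lrelu \<beta> (x $ k)) $ i"
      proof (cases "i = k")
        case True then show ?thesis unfolding A1_def A2_def Lam_def by (simp only: vec_lambda_beta sum_delta_gen setc_nth if_True) simp
      next
        case False
        have "A2 (Lam \<beta> (A1 x)) $ i = - C + lrelu \<beta> (C + x$i)"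
          unfolding A1_def A2_def Lam_def using False by (simp only: vec_lambda_beta sum_delta_gen if_False)
        also have "\<dots> = x$i" using \<open>x$i + C \<ge> 0\<close> by (simp add: add.commute)
        finally show ?thesis using False by simp
      qed
    qed
  qed
  then show "\<exists>g\<in>NN_LReLU. \<forall>x\<in>S. g x = setc k x (lrelu \<beta> (x$k))"
    using g by (intro bexI[of _ "\<lambda>x. A2 (Lam \<beta> (A1 x))"]) auto
qed


lemma realz_cong: "realz T \<Longrightarrow> (\<And>x. T x = T' x) \<Longrightarrow> realz T'"
proof -
  assume "realz T" "\<And>x. T x = T' x"
  then have "T = T'" by auto
  then show "realz T'" using \<open>realz T\<close> by simp
qed

definition affl :: "(real^'n::finite \<Rightarrow> real) \<Rightarrow> bool" where
  "affl L \<longleftrightarrow> (\<exists>c a. \<forall>x. L x = c + (\<Sum>j\<in>UNIV. a j * x$j))"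

lemma affl_const: "affl (\<lambda>_. c)"
  unfolding affl_def by (rule exI[of _ c], rule exI[of _ "\<lambda>_. 0"]) simp

lemma affl_proj: "affl (\<lambda>x. x$k)"
  unfolding affl_def by (rule exI[of _ 0], rule exI[of _ "\<lambda>j. if k = j then 1 else 0"]) (simp add: sum_delta_gen)

lemma affl_add: "affl L1 \<Longrightarrow> affl L2 \<Longrightarrow> affl (\<lambda>x. L1 x + L2 x)"
proof -
  assume "affl L1" "affl L2"
  then obtain c1 a1 c2 a2 where 1: "\<And>x. L1 x = c1 + (\<Sum>j\<in>UNIV. a1 j * x$j)" and 2: "\<And>x. L2 x = c2 + (\<Sum>j\<in>UNIV. a2 j * x$j)"
    unfolding affl_def by blast
  show ?thesis unfolding affl_def
    by (rule exI[of _ "c1 + c2"], rule exI[of _ "\<lambda>j. a1 j + a2 j"]) (simp add: 1 2 sum.distrib distrib_right)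
qed

lemma affl_scale: "affl L \<Longrightarrow> affl (\<lambda>x. r * L x)"
proof -
  assume "affl L"
  then obtain c a where 1: "\<And>x. L x = c + (\<Sum>j\<in>UNIV. a j * x$j)" unfolding affl_def by blast
  show ?thesis unfolding affl_def
    by (rule exI[of _ "r * c"], rule exI[of _ "\<lambda>j. r * a j"]) (simp add: 1 sum_distrib_left distrib_left mult.assoc)
qed

lemma affl_sub: "affl L1 \<Longrightarrow> affl L2 \<Longrightarrow> affl (\<lambda>x. L1 x - L2 x)"
  using affl_add[of L1 "\<lambda>x. (-1) * L2 x"] affl_scale[of L2 "-1"] by simp

lemma affl_div: "affl L \<Longrightarrow> affl (\<lambda>x. L x / r)"
  using affl_scale[of L "1/r"] by simp

lemma realz_setc_affl: "affl L \<Longrightarrow> realz (\<lambda>x. setc k x (L x))"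
proof -
  assume "affl L"
  then obtain c a where 1: "\<And>x. L x = c + (\<Sum>j\<in>UNIV. a j * x$j)" unfolding affl_def by blast
  show ?thesis by (rule realz_cong[OF realz_upd[of k c a]]) (simp add: 1)
qed

lemma realz_id: "realz (\<lambda>x. x)"
  using realz_setc_affl[OF affl_proj, of k k] by simp

definition indep :: "'n \<Rightarrow> (real^'n::finite \<Rightarrow> real) \<Rightarrow> bool" where
  "indep l h \<longleftrightarrow> (\<forall>x v. h (setc l x v) = h x)"

definition Hs :: "'n \<Rightarrow> (real^'n::finite \<Rightarrow> real) set" where
  "Hs l = {h. indep l h \<and> continuous_on UNIV h \<and> realz (\<lambda>x. setc l x (x$l + h x))}"

lemma H_add:
  assumes "h1 \<in> Hs l" "h2 \<in> Hs l"
  shows "(\<lambda>x. h1 x + h2 x) \<in> Hs l"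
proof -
  have i: "indep l h1" "indep l h2" using assms unfolding Hs_def by auto
  have r: "realz (\<lambda>x. setc l (setc l x (x$l + h1 x)) ((setc l x (x$l + h1 x))$l + h2 (setc l x (x$l + h1 x))))"
    using realz_comp[of "\<lambda>x. setc l x (x$l + h1 x)" "\<lambda>x. setc l x (x$l + h2 x)"] assms unfolding Hs_def by auto
  have "realz (\<lambda>x. setc l x (x$l + (h1 x + h2 x)))"
    by (rule realz_cong[OF r]) (use i in \<open>simp add: indep_def add.assoc\<close>)
  moreover have "indep l (\<lambda>x. h1 x + h2 x)" using i by (simp add: indep_def)
  moreover have "continuous_on UNIV (\<lambda>x. h1 x + h2 x)" using assms unfolding Hs_def by (auto intro: continuous_on_add)
  ultimately show ?thesis unfolding Hs_def by blast
qed

lemma H_zero: "(\<lambda>_. 0) \<in> Hs l"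
  unfolding Hs_def indep_def using realz_id by simp

lemma H_scale:
  assumes "h \<in> Hs l"
  shows "(\<lambda>x. r * h x) \<in> Hs l"
proof (cases "r = 0")
  case True then show ?thesis using H_zero by simp
next
  case False
  have i: "indep l h" using assms unfolding Hs_def by auto
  have s1: "realz (\<lambda>x. setc l x (x$l / r))" by (rule realz_setc_affl[OF affl_div[OF affl_proj]])
  have s2: "realz (\<lambda>x. setc l x (r * x$l))" by (rule realz_setc_affl[OF affl_scale[OF affl_proj]])
  have sh: "realz (\<lambda>x. setc l x (x$l + h x))" using assms unfolding Hs_def by auto
  have r: "realz (\<lambda>x. (\<lambda>x. setc l x (r * x$l)) ((\<lambda>x. setc l x (x$l + h x)) ((\<lambda>x. setc l x (x$l / r)) x)))"
    by (rule realz_comp[OF realz_comp[OF s1 sh] s2])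
  have "realz (\<lambda>x. setc l x (x$l + r * h x))"
    by (rule realz_cong[OF r]) (use i False in \<open>simp add: indep_def distrib_left\<close>)
  moreover have "indep l (\<lambda>x. r * h x)" using i by (simp add: indep_def)
  moreover have "continuous_on UNIV (\<lambda>x. r * h x)" using assms unfolding Hs_def by (auto intro: continuous_on_mult_left)
  ultimately show ?thesis unfolding Hs_def by blast
qed

lemma H_affl:
  assumes "affl L" "indep l L"
  shows "L \<in> Hs l"
proof -
  have "affl (\<lambda>x. x$l + L x)" by (intro affl_add affl_proj assms(1))
  then have "realz (\<lambda>x. setc l x (x$l + L x))" by (rule realz_setc_affl)
  moreover have "continuous_on UNIV L"
  proof -
    obtain c a where 1: "\<And>x. L x = c + (\<Sum>j\<in>UNIV. a j * x$j)" using assms(1) unfolding affl_def by blast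
    have "L = (\<lambda>x. c + (\<Sum>j\<in>UNIV. a j * x$j))" using 1 by auto
    then show ?thesis by (auto intro!: continuous_intros)
  qed
  ultimately show ?thesis using assms unfolding Hs_def by blast
qed


lemma lrelu_2_half: "lrelu 2 (lrelu (1/2) t) = t"
  by (auto simp: lrelu_def)

lemma lrelu_half_max: "2 * lrelu (1/2) t - t = max 0 t"
  by (auto simp: lrelu_def)

lemma lrelu_half_k: "(lrelu (1/2) t) = (if t \<ge> 0 then t else t/2)"
  by (auto simp: lrelu_def)

lemma H_relu:
  fixes a :: "'n::finite \<Rightarrow> real"
  assumes al: "a l = 0"
  shows "(\<lambda>x. max 0 (c + (\<Sum>j\<in>UNIV. a j * x$j))) \<in> Hs l"
proof (cases "\<forall>j. a j = 0")
  case True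
  then have "(\<lambda>x. max 0 (c + (\<Sum>j\<in>UNIV. a j * x$j))) = (\<lambda>_. max 0 c)" by auto
  moreover have "(\<lambda>_. max 0 c) \<in> Hs l" by (rule H_affl[OF affl_const]) (simp add: indep_def)
  ultimately show ?thesis by simp
next
  case False
  then obtain k where ak: "a k \<noteq> 0" by blast
  have kl: "k \<noteq> l" using ak al by auto
  define ell where "ell = (\<lambda>x::real^'n. c + (\<Sum>j\<in>UNIV. a j * x$j))"
  have affell: "affl ell" unfolding ell_def affl_def by blast
  have ell_setc: "ell (setc i y v) = ell y + a i * (v - y$i)" for i y v
    unfolding ell_def sum_setc by simp
  have ell_l: "ell (setc l y v) = ell y" for y v using ell_setc[of l] al by simp
  have indl: "indep l ell" unfolding indep_def using ell_l by simp
  define M1 where "M1 = (\<lambda>x. setc k x (ell x))"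
  define M2 where "M2 = (\<lambda>x::real^'n. setc k x (lrelu (1/2) (x$k)))"
  define M3 where "M3 = (\<lambda>x::real^'n. setc l x (x$l + 2 * x$k))"
  define M4 where "M4 = (\<lambda>x::real^'n. setc k x (lrelu 2 (x$k)))"
  define M5 where "M5 = (\<lambda>x. setc k x ((x$k + a k * x$k - ell x) / a k))"
  define M6 where "M6 = (\<lambda>x. setc l x (x$l - ell x))"
  have r1: "realz M1" unfolding M1_def by (rule realz_setc_affl[OF affell])
  have r2: "realz M2" unfolding M2_def by (rule realz_coord)
  have r3: "realz M3" unfolding M3_def by (rule realz_setc_affl[OF affl_add[OF affl_proj affl_scale[OF affl_proj]]])
  have r4: "realz M4" unfolding M4_def by (rule realz_coord)
  have r5: "realz M5" unfolding M5_def
    by (rule realz_setc_affl[OF affl_div[OF affl_sub[OF affl_add[OF affl_proj affl_scale[OF affl_proj]] affell]]])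
  have r6: "realz M6" unfolding M6_def by (rule realz_setc_affl[OF affl_sub[OF affl_proj affell]])
  have r: "realz (\<lambda>x. M6 (M5 (M4 (M3 (M2 (M1 x))))))"
    by (rule realz_comp[OF realz_comp[OF realz_comp[OF realz_comp[OF realz_comp[OF r1 r2] r3] r4] r5] r6])
  have eq: "M6 (M5 (M4 (M3 (M2 (M1 x))))) = setc l x (x$l + max 0 (ell x))" for x
  proof -
    define L0 where "L0 = ell x"
    define s where "s = lrelu (1/2) L0"
    have x2: "M2 (M1 x) = setc k x s" unfolding M1_def M2_def s_def L0_def by simp
    define x3 where "x3 = setc l (setc k x s) (x$l + 2 * s)"
    have e3: "M3 (M2 (M1 x)) = x3" unfolding x2 M3_def x3_def using kl by simp
    have x3k: "x3$k = s" unfolding x3_def using kl by simp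
    define x4 where "x4 = setc k x3 L0"
    have e4: "M4 x3 = x4" unfolding M4_def x4_def x3k s_def by (simp add: lrelu_2_half)
    have ell4: "ell x4 = L0 + a k * (L0 - x$k)"
      unfolding x4_def x3_def ell_setc ell_l using kl al unfolding L0_def by (simp add: algebra_simps)
    have x4k: "x4$k = L0" unfolding x4_def by simp
    have e5: "M5 x4 = setc k x4 (x$k)"
      unfolding M5_def x4k ell4 using ak by (simp add: field_simps)
    have ell5: "ell (setc k x4 (x$k)) = L0" unfolding ell_setc ell4 x4k by (simp add: algebra_simps)
    have x5l: "setc k x4 (x$k) $ l = x$l + 2 * s" unfolding x4_def x3_def using kl by simp
    have e6: "M6 (setc k x4 (x$k)) = setc l (setc k x4 (x$k)) (x$l + 2 * s - L0)"
      unfolding M6_def ell5 x5l by simp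
    have fin: "setc l (setc k x4 (x$k)) (x$l + 2 * s - L0) = setc l x (x$l + max 0 (ell x))"
      unfolding vec_eq_iff
    proof
      fix i
      show "setc l (setc k x4 (x$k)) (x$l + 2 * s - L0) $ i = setc l x (x$l + max 0 (ell x)) $ i"
      proof (cases "i = l")
        case True then show ?thesis using lrelu_half_max[of L0] unfolding s_def L0_def by simp
      next
        case False then show ?thesis unfolding x4_def x3_def by simp
      qed
    qed
    show ?thesis unfolding e3 e4 e5 e6 fin ..
  qed
  have "realz (\<lambda>x. setc l x (x$l + max 0 (ell x)))" by (rule realz_cong[OF r eq])
  moreover have "indep l (\<lambda>x. max 0 (ell x))" using indl unfolding indep_def by simp
  moreover have "continuous_on UNIV (\<lambda>x. max 0 (ell x))" unfolding ell_def by (intro continuous_intros)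
  ultimately show ?thesis unfolding Hs_def ell_def by blast
qed


lemma sum_split_at:
  fixes f d :: "nat \<Rightarrow> real"
  assumes "j < N" "\<And>k. k < j \<Longrightarrow> f k = d k" "\<And>k. j < k \<Longrightarrow> k < N \<Longrightarrow> f k = 0"
  shows "(\<Sum>k<N. f k) = (\<Sum>k<j. d k) + f j"
  using assms
proof (induction N)
  case 0 then show ?case by simp
next
  case (Suc n)
  show ?case
  proof (cases "j = n")
    case True
    have "(\<Sum>k<n. f k) = (\<Sum>k<n. d k)" by (rule sum.cong) (use Suc.prems True in auto)
    then show ?thesis using True by simp
  next
    case False
    then have "j < n" using Suc.prems by simp
    then have "(\<Sum>k<n. f k) = (\<Sum>k<j. d k) + f j" using Suc by auto
    moreover have "f n = 0" using Suc.prems \<open>j < n\<close> by auto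
    ultimately show ?thesis by simp
  qed
qed

definition clamp01 :: "real \<Rightarrow> real" where
  "clamp01 z = max 0 z - max 0 (z - 1)"

lemma clamp01_ge1: "z \<ge> 1 \<Longrightarrow> clamp01 z = 1" by (simp add: clamp01_def)
lemma clamp01_le0: "z \<le> 0 \<Longrightarrow> clamp01 z = 0" by (simp add: clamp01_def)
lemma clamp01_range: "0 \<le> clamp01 z" "clamp01 z \<le> 1" by (auto simp: clamp01_def)

lemma grid_locate:
  fixes A D t :: real and N :: nat
  assumes D: "D > 0" and N: "N > 0" and t: "A \<le> t" "t \<le> A + N * D"
  obtains j where "j < N" "A + j * D \<le> t" "t \<le> A + (Suc j) * D"
proof -
  define q where "q = nat \<lfloor>(t - A) / D\<rfloor>"
  have q0: "0 \<le> (t - A) / D" using D t by simp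
  have qle: "real q \<le> (t - A) / D" unfolding q_def using q0 by (simp add: of_nat_floor)
  have qgt: "(t - A) / D < real q + 1" unfolding q_def using q0
    by (metis floor_correct of_int_floor_le of_nat_nat zero_le_floor add_le_cancel_right
        floor_less_cancel floor_le_zero less_add_one not_le real_of_int_floor_add_one_gt)
  show ?thesis
  proof (cases "q < N")
    case True
    show ?thesis
    proof (rule that[of q])
      show "A + real q * D \<le> t" using qle D by (simp add: field_simps)
      show "t \<le> A + real (Suc q) * D" using qgt D by (simp add: field_simps)
    qed (use True in auto)
  next
    case False
    then have "real N \<le> (t - A) / D" using qle by linarith
    then have "A + N * D \<le> t" using D by (simp add: field_simps)
    then have tt: "t = A + N * D" using t by simp
    show ?thesis
    proof (rule that[of "N - 1"])
      show "A + real (N - 1) * D \<le> t" using tt D N by (simp add: of_nat_diff algebra_simps)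
      show "t \<le> A + real (Suc (N - 1)) * D" using tt N by simp
    qed (use N in auto)
  qed
qed

lemma ramp_core:
  fixes \<phi> :: "real \<Rightarrow> real"
  assumes D: "D > 0" and N: "N > 0" and t: "A \<le> t" "t \<le> A + N * D"
    and uc: "\<And>s r. A \<le> s \<Longrightarrow> s \<le> A + N * D \<Longrightarrow> A \<le> r \<Longrightarrow> r \<le> A + N * D \<Longrightarrow> \<bar>s - r\<bar> \<le> D \<Longrightarrow> \<bar>\<phi> s - \<phi> r\<bar> < e / 2"
  shows "\<bar>\<phi> t - (\<phi> A + (\<Sum>k<N. (\<phi> (A + real (Suc k) * D) - \<phi> (A + real k * D)) * clamp01 ((t - (A + real k * D)) / D)))\<bar> < e"
proof -
  obtain j where j: "j < N" "A + j * D \<le> t" "t \<le> A + (Suc j) * D" using grid_locate[OF D N t] by blast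
  define g where "g k = A + real k * D" for k
  define w where "w k = \<phi> (g (Suc k)) - \<phi> (g k)" for k
  define \<theta> where "\<theta> = clamp01 ((t - g j) / D)"
  have "(\<Sum>k<N. w k * clamp01 ((t - g k) / D)) = (\<Sum>k<j. w k) + w j * clamp01 ((t - g j) / D)"
  proof (rule sum_split_at[OF j(1)])
    fix k assume "k < j"
    then have "real (Suc k) \<le> real j" by simp
    then have "g (Suc k) \<le> t" using j(2) D unfolding g_def by (smt (verit) mult_right_mono)
    then have "(t - g k) / D \<ge> 1" using D unfolding g_def by (simp add: field_simps)
    then show "w k * clamp01 ((t - g k) / D) = w k" by (simp add: clamp01_ge1)
  next
    fix k assume "j < k" "k < N"
    then have "real (Suc j) \<le> real k" by simp
    then have "t \<le> g k" using j(3) D unfolding g_def by (smt (verit) mult_right_mono)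
    then have "(t - g k) / D \<le> 0" using D by (simp add: divide_nonpos_pos)
    then show "w k * clamp01 ((t - g k) / D) = 0" by (simp add: clamp01_le0)
  qed
  also have "(\<Sum>k<j. w k) = \<phi> (g j) - \<phi> (g 0)" unfolding w_def by (rule sum_lessThan_telescope)
  finally have sumeq: "(\<Sum>k<N. w k * clamp01 ((t - g k) / D)) = \<phi> (g j) - \<phi> A + w j * \<theta>"
    by (simp add: g_def \<theta>_def)
  have th: "0 \<le> \<theta>" "\<theta> \<le> 1" unfolding \<theta>_def by (rule clamp01_range)+
  have gj: "A \<le> g j" "g j \<le> A + N * D" "A \<le> g (Suc j)" "g (Suc j) \<le> A + N * D"
    using j D unfolding g_def by (auto intro!: mult_right_mono)
  have d1: "\<bar>\<phi> t - \<phi> (g j)\<bar> < e / 2"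
    by (rule uc) (use t gj j D in \<open>auto simp: g_def algebra_simps\<close>)
  have d2: "\<bar>w j\<bar> < e / 2" unfolding w_def
    by (rule uc) (use gj D in \<open>auto simp: g_def algebra_simps\<close>)
  have "\<bar>w j * \<theta>\<bar> \<le> \<bar>w j\<bar>" using th by (simp add: abs_mult mult_left_le)
  then have "\<bar>\<phi> t - (\<phi> A + (\<phi> (g j) - \<phi> A + w j * \<theta>))\<bar> < e" using d1 d2 by linarith
  then show ?thesis using sumeq unfolding g_def w_def by simp
qed


lemma H_const: "(\<lambda>_. c) \<in> Hs l"
  by (rule H_affl[OF affl_const]) (simp add: indep_def)

lemma H_sum: "finite I \<Longrightarrow> (\<And>i. i \<in> I \<Longrightarrow> f i \<in> Hs l) \<Longrightarrow> (\<lambda>x. \<Sum>i\<in>I. f i x) \<in> Hs l"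
proof (induction I rule: finite_induct)
  case empty then show ?case using H_zero by simp
next
  case (insert i I)
  have "(\<lambda>x. f i x + (\<Sum>i\<in>I. f i x)) \<in> Hs l"
    by (rule H_add) (use insert in auto)
  then show ?case using insert by simp
qed

lemma inner_vec_sum: "(a::real^'n::finite) \<bullet> x = (\<Sum>j\<in>UNIV. a$j * x$j)"
  by (simp add: inner_vec_def)

lemma H_clamp:
  fixes a :: "real^'n::finite"
  assumes "a$l = 0"
  shows "(\<lambda>x. clamp01 ((a \<bullet> x - b) / D)) \<in> Hs l"
proof -
  have e1: "(a \<bullet> x - b) / D = (- b / D) + (\<Sum>j\<in>UNIV. (a$j / D) * x$j)" for x
    by (simp add: inner_vec_sum sum_divide_distrib[symmetric] diff_divide_distrib)
  have e2: "(a \<bullet> x - b) / D - 1 = (- b / D - 1) + (\<Sum>j\<in>UNIV. (a$j / D) * x$j)" for x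
    using e1[of x] by simp
  have h1: "(\<lambda>x. max 0 ((- b / D) + (\<Sum>j\<in>UNIV. (a$j / D) * x$j))) \<in> Hs l"
    by (rule H_relu) (simp add: assms)
  have h2: "(\<lambda>x. max 0 ((- b / D - 1) + (\<Sum>j\<in>UNIV. (a$j / D) * x$j))) \<in> Hs l"
    by (rule H_relu) (simp add: assms)
  have "(\<lambda>x. max 0 ((- b / D) + (\<Sum>j\<in>UNIV. (a$j / D) * x$j)) + (-1) * max 0 ((- b / D - 1) + (\<Sum>j\<in>UNIV. (a$j / D) * x$j))) \<in> Hs l"
    by (rule H_add[OF h1 H_scale[OF h2]])
  moreover have "(\<lambda>x. max 0 ((- b / D) + (\<Sum>j\<in>UNIV. (a$j / D) * x$j)) + (-1) * max 0 ((- b / D - 1) + (\<Sum>j\<in>UNIV. (a$j / D) * x$j)))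
     = (\<lambda>x. clamp01 ((a \<bullet> x - b) / D))"
    by (rule ext) (simp only: e1 e2 clamp01_def, simp)
  ultimately show ?thesis by simp
qed

lemma H_exp:
  fixes a :: "real^'n::finite"
  assumes S: "compact S" and al: "a$l = 0" and dl: "\<delta> > 0"
  shows "\<exists>h\<in>Hs l. \<forall>x\<in>S. \<bar>exp (a \<bullet> x) - h x\<bar> < \<delta>"
proof -
  obtain C where C: "\<And>x. x \<in> S \<Longrightarrow> norm x \<le> C"
  proof -
    have "bounded S" using compact_imp_bounded[OF S] .
    then obtain C where "\<forall>x\<in>S. norm x \<le> C" unfolding bounded_iff by (elim exE)
    then show ?thesis using that by blast
  qed
  define M where "M = norm a * max C 0 + 1"
  have M0: "M > 0" unfolding M_def by (smt (verit) norm_ge_zero zero_le_mult_iff max.cobounded2)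
  have Mb: "\<bar>a \<bullet> x\<bar> \<le> M" if "x \<in> S" for x
  proof -
    have "\<bar>a \<bullet> x\<bar> \<le> norm a * norm x" by (rule Cauchy_Schwarz_ineq2)
    also have "\<dots> \<le> norm a * max C 0" using C[OF that] by (intro mult_left_mono) auto
    finally show ?thesis unfolding M_def by simp
  qed
  have "uniformly_continuous_on {-M..M} exp"
    by (rule compact_uniformly_continuous) (auto intro: continuous_intros)
  then obtain d where d: "d > 0" "\<And>s r. s \<in> {-M..M} \<Longrightarrow> r \<in> {-M..M} \<Longrightarrow> dist r s < d \<Longrightarrow> dist (exp r) (exp s) < \<delta> / 2"
    unfolding uniformly_continuous_on_def using dl by (metis half_gt_zero)
  define N where "N = nat \<lceil>2 * M / d\<rceil> + 1"
  have N0: "N > 0" unfolding N_def by simp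
  have NM: "2 * M / d < real N" unfolding N_def by linarith
  define D where "D = 2 * M / real N"
  have D0: "D > 0" unfolding D_def using M0 N0 by simp
  have Dd: "D < d" unfolding D_def using NM d(1) N0 by (simp add: field_simps)
  have ND: "- M + real N * D = M" unfolding D_def using N0 by simp
  define w where "w k = exp (- M + real (Suc k) * D) - exp (- M + real k * D)" for k
  define h where "h x = exp (- M) + (\<Sum>k<N. w k * clamp01 ((a \<bullet> x - (- M + real k * D)) / D))" for x
  have hH: "h \<in> Hs l"
  proof -
    have "(\<lambda>x. (\<lambda>_. exp (-M)) x + (\<lambda>x. \<Sum>k\<in>{..<N}. (\<lambda>k x. w k * clamp01 ((a \<bullet> x - (- M + real k * D)) / D)) k x) x) \<in> Hs l"
      by (intro H_add H_const H_sum H_scale H_clamp al) auto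
    then show ?thesis unfolding h_def by simp
  qed
  have "\<bar>exp (a \<bullet> x) - h x\<bar> < \<delta>" if x: "x \<in> S" for x
  proof -
    have t: "- M \<le> a \<bullet> x" "a \<bullet> x \<le> - M + real N * D" using Mb[OF x] ND by auto
    have uc: "\<bar>exp s - exp r\<bar> < \<delta> / 2" if "- M \<le> s" "s \<le> - M + real N * D" "- M \<le> r" "r \<le> - M + real N * D" "\<bar>s - r\<bar> \<le> D" for s r
      using d(2)[of r s] that Dd ND by (auto simp: dist_real_def)
    show ?thesis using ramp_core[OF D0 N0 t, of exp \<delta>, OF uc] unfolding h_def w_def by simp
  qed
  then show ?thesis using hH by blast
qed


definition Fe :: "(real \<times> (real^'n::finite)) list \<Rightarrow> real^'n \<Rightarrow> real" where
  "Fe ps x = sum_list (map (\<lambda>p. fst p * exp (snd p \<bullet> x)) ps)"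

definition Rexp :: "'n::finite \<Rightarrow> (real^'n \<Rightarrow> real) set" where
  "Rexp l = {g. \<exists>ps. (\<forall>p\<in>set ps. snd p $ l = 0) \<and> g = Fe ps}"

lemma Fe_Nil[simp]: "Fe [] x = 0" by (simp add: Fe_def)
lemma Fe_Cons[simp]: "Fe (p # ps) x = fst p * exp (snd p \<bullet> x) + Fe ps x" by (simp add: Fe_def)
lemma Fe_append: "Fe (ps @ qs) x = Fe ps x + Fe qs x" by (simp add: Fe_def)

lemma Fe_mul1: "c * exp (a \<bullet> x) * Fe qs x = Fe (map (\<lambda>q. (c * fst q, a + snd q)) qs) x"
  by (induction qs) (simp_all add: algebra_simps exp_add inner_add_left)

lemma Fe_mul: "Fe ps x * Fe qs x = Fe (concat (map (\<lambda>p. map (\<lambda>q. (fst p * fst q, snd p + snd q)) qs) ps)) x"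
proof (induction ps)
  case Nil then show ?case by simp
next
  case (Cons p ps)
  have "Fe (p # ps) x * Fe qs x = fst p * exp (snd p \<bullet> x) * Fe qs x + Fe ps x * Fe qs x"
    by (simp add: algebra_simps)
  also have "\<dots> = Fe (map (\<lambda>q. (fst p * fst q, snd p + snd q)) qs) x + Fe ps x * Fe qs x"
    by (simp add: Fe_mul1)
  finally show ?case using Cons by (simp add: Fe_append)
qed

lemma Fe_cont: "continuous_on S (Fe ps)"
proof (induction ps)
  case Nil
  have "Fe [] = (\<lambda>_. 0)" by (rule ext) simp
  then show ?case by simp
next
  case (Cons p ps)
  have "Fe (p # ps) = (\<lambda>x. fst p * exp (snd p \<bullet> x) + Fe ps x)" by (rule ext) simp
  then show ?case using Cons by (simp add: continuous_intros)
qed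

lemma Rexp_ring:
  fixes S :: "(real^'n::finite) set"
  assumes S: "compact S" and Sl: "\<And>x. x \<in> S \<Longrightarrow> x$l = 0"
  shows "function_ring_on (Rexp l) S"
proof
  show "compact S" by (rule S)
next
  fix f assume "f \<in> Rexp l" then show "continuous_on S f" unfolding Rexp_def using Fe_cont by blast
next
  fix f g assume "f \<in> Rexp l" "g \<in> Rexp l"
  then obtain ps qs where ps: "\<forall>p\<in>set ps. snd p $ l = 0" "f = Fe ps" and qs: "\<forall>p\<in>set qs. snd p $ l = 0" "g = Fe qs"
    unfolding Rexp_def by blast
  show "(\<lambda>x. f x + g x) \<in> Rexp l" unfolding Rexp_def
  proof (intro CollectI exI[of _ "ps @ qs"] conjI)
    show "\<forall>p\<in>set (ps @ qs). snd p $ l = 0" using ps qs by auto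
    show "(\<lambda>x. f x + g x) = Fe (ps @ qs)" using ps qs by (auto simp: Fe_append)
  qed
  show "(\<lambda>x. f x * g x) \<in> Rexp l" unfolding Rexp_def
  proof (intro CollectI exI[of _ "concat (map (\<lambda>p. map (\<lambda>q. (fst p * fst q, snd p + snd q)) qs) ps)"] conjI)
    show "\<forall>p\<in>set (concat (map (\<lambda>p. map (\<lambda>q. (fst p * fst q, snd p + snd q)) qs) ps)). snd p $ l = 0"
      using ps qs by auto
    show "(\<lambda>x. f x * g x) = Fe (concat (map (\<lambda>p. map (\<lambda>q. (fst p * fst q, snd p + snd q)) qs) ps))"
      using ps qs by (auto simp: Fe_mul)
  qed
next
  fix c :: real
  show "(\<lambda>_. c) \<in> Rexp l" unfolding Rexp_def
  proof (intro CollectI exI[of _ "[(c, 0)]"] conjI)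
    show "(\<lambda>_. c) = Fe [(c, 0)]" by (rule ext) simp
  qed simp
next
  fix x y assume xy: "x \<in> S" "y \<in> S" "x \<noteq> y"
  then obtain i where i: "x$i \<noteq> y$i" by (auto simp: vec_eq_iff)
  have il: "i \<noteq> l" using i Sl xy by auto
  define a :: "real^'n" where "a = (\<chi> j. if j = i then 1 else 0)"
  have ax: "a \<bullet> z = z$i" for z
  proof -
    have "a \<bullet> z = (\<Sum>j\<in>UNIV. (if i = j then 1 else 0) * z$j)" unfolding a_def inner_vec_sum
      by (rule sum.cong) auto
    then show ?thesis by (simp only: sum_delta_gen)
  qed
  show "\<exists>f\<in>Rexp l. f x \<noteq> f y"
  proof (rule bexI[of _ "Fe [(1, a)]"])
    show "Fe [(1, a)] x \<noteq> Fe [(1, a)] y" using i by (simp add: ax)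
    show "Fe [(1, a)] \<in> Rexp l" unfolding Rexp_def
      by (rule CollectI, rule exI[of _ "[(1,a)]"]) (use il in \<open>simp add: a_def\<close>)
  qed
qed

lemma abs_tri4: "\<bar>(A::real) + B - (C + D)\<bar> \<le> \<bar>A - C\<bar> + \<bar>B - D\<bar>" by (smt (verit))

lemma Rexp_approx:
  assumes S: "compact S"
  shows "\<forall>p\<in>set ps. snd p $ l = 0 \<Longrightarrow> \<delta> > 0 \<Longrightarrow> \<exists>h\<in>Hs l. \<forall>x\<in>S. \<bar>Fe ps x - h x\<bar> < \<delta>"
proof (induction ps arbitrary: \<delta>)
  case Nil
  show ?case by (rule bexI[OF _ H_zero]) (use Nil in simp)
next
  case (Cons p ps)
  obtain c a where p: "p = (c, a)" by (cases p)
  have al: "a$l = 0" using Cons.prems p by auto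
  define \<delta>1 where "\<delta>1 = \<delta> / (2 * (\<bar>c\<bar> + 1))"
  have d1: "\<delta>1 > 0" unfolding \<delta>1_def using Cons.prems by (simp add: add_pos_nonneg)
  obtain h1 where h1: "h1 \<in> Hs l" "\<forall>x\<in>S. \<bar>exp (a \<bullet> x) - h1 x\<bar> < \<delta>1" using H_exp[OF S al d1] by blast
  obtain h2 where h2: "h2 \<in> Hs l" "\<forall>x\<in>S. \<bar>Fe ps x - h2 x\<bar> < \<delta> / 2"
    using Cons.IH[of "\<delta>/2"] Cons.prems by auto
  show ?case
  proof (rule bexI[of _ "\<lambda>x. c * h1 x + h2 x"])
    show "(\<lambda>x. c * h1 x + h2 x) \<in> Hs l" by (rule H_add[OF H_scale[OF h1(1)] h2(1)])
    show "\<forall>x\<in>S. \<bar>Fe (p # ps) x - (c * h1 x + h2 x)\<bar> < \<delta>"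
    proof
      fix x assume x: "x \<in> S"
      have "\<bar>c * exp (a \<bullet> x) - c * h1 x\<bar> = \<bar>c\<bar> * \<bar>exp (a \<bullet> x) - h1 x\<bar>"
        by (simp add: abs_mult[symmetric] right_diff_distrib)
      also have "\<dots> \<le> \<bar>c\<bar> * \<delta>1" using h1(2) x by (intro mult_left_mono) auto
      also have "\<dots> < \<delta> / 2"
      proof -
        have "\<bar>c\<bar> * \<delta>1 = \<delta> / 2 * (\<bar>c\<bar> / (\<bar>c\<bar> + 1))" unfolding \<delta>1_def by (simp add: field_simps)
        also have "\<dots> < \<delta> / 2 * 1"
        proof (rule mult_strict_left_mono)
          show "\<bar>c\<bar> / (\<bar>c\<bar> + 1) < 1" by simp
        qed (use Cons.prems in simp)
        also have "\<dots> = \<delta> / 2" by simp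
        finally show ?thesis .
      qed
      finally have "\<bar>c * exp (a \<bullet> x) - c * h1 x\<bar> < \<delta> / 2" .
      moreover have "\<bar>Fe ps x - h2 x\<bar> < \<delta> / 2" using h2(2) x by blast
      ultimately show "\<bar>Fe (p # ps) x - (c * h1 x + h2 x)\<bar> < \<delta>"
        using p abs_tri4[of "c * exp (a \<bullet> x)" "Fe ps x" "c * h1 x" "h2 x"] by simp
    qed
  qed
qed

lemma continuous_on_setc: "continuous_on UNIV (\<lambda>x. setc k x v)"
  unfolding setc_def
proof (rule continuous_on_vec_lambda)
  fix i show "continuous_on UNIV (\<lambda>x::real^'a. if i = k then v else x $ i)"
    by (cases "i = k") (simp_all add: continuous_on_component continuous_on_id)
qed

lemma H_dense:
  fixes u :: "real^'n::finite \<Rightarrow> real"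
  assumes K: "compact K" and u: "continuous_on UNIV u" "indep l u" and e: "e > 0"
  shows "\<exists>h\<in>Hs l. \<forall>x\<in>K. \<bar>u x - h x\<bar> < e"
proof -
  define S where "S = (\<lambda>x. setc l x 0) ` K"
  have S: "compact S" unfolding S_def
    by (rule compact_continuous_image[OF continuous_on_subset[OF continuous_on_setc] K]) simp
  have Sl: "\<And>x. x \<in> S \<Longrightarrow> x$l = 0" unfolding S_def by auto
  interpret function_ring_on "Rexp l" S by (rule Rexp_ring[OF S Sl])
  obtain g where g: "g \<in> Rexp l" "\<forall>x\<in>S. \<bar>u x - g x\<bar> < e / 2"
    using Stone_Weierstrass_basic[OF continuous_on_subset[OF u(1)], of "e/2"] e by auto
  obtain ps where ps: "\<forall>p\<in>set ps. snd p $ l = 0" "g = Fe ps" using g(1) unfolding Rexp_def by blast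
  obtain h where h: "h \<in> Hs l" "\<forall>x\<in>S. \<bar>Fe ps x - h x\<bar> < e / 2" using Rexp_approx[OF S ps(1), of "e/2"] e by auto
  have hi: "indep l h" using h(1) unfolding Hs_def by auto
  show ?thesis
  proof (rule bexI[OF _ h(1)], intro ballI)
    fix x assume x: "x \<in> K"
    have xs: "setc l x 0 \<in> S" unfolding S_def using x by blast
    have "u x = u (setc l x 0)" "h x = h (setc l x 0)" using u(2) hi unfolding indep_def by auto
    moreover have "\<bar>u (setc l x 0) - g (setc l x 0)\<bar> < e / 2" using g(2) xs by blast
    moreover have "\<bar>g (setc l x 0) - h (setc l x 0)\<bar> < e / 2" using h(2) xs ps(2) by blast
    ultimately show "\<bar>u x - h x\<bar> < e" by linarith
  qed
qed


definition shear :: "'n \<Rightarrow> (real^'n::finite \<Rightarrow> real) \<Rightarrow> real^'n \<Rightarrow> real^'n" where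
  "shear l h x = setc l x (x$l + h x)"

definition opsig :: "'n \<Rightarrow> (real^'n::finite \<Rightarrow> real) \<Rightarrow> real \<Rightarrow> real^'n \<Rightarrow> real^'n" where
  "opsig l b \<beta> x = setc l x (lrelu \<beta> (x$l - b x) + b x)"

lemma realz_shear: "h \<in> Hs l \<Longrightarrow> realz (shear l h)"
  unfolding Hs_def shear_def by auto

lemma realz_opsig:
  assumes b: "b \<in> Hs l"
  shows "realz (opsig l b \<beta>)"
proof -
  have bi: "indep l b" using b unfolding Hs_def by auto
  have mb: "(\<lambda>x. (-1) * b x) \<in> Hs l" by (rule H_scale[OF b])
  have r: "realz (\<lambda>x. shear l b ((\<lambda>x. setc l x (lrelu \<beta> (x$l))) (shear l (\<lambda>x. (-1) * b x) x)))"
    by (rule realz_comp[OF realz_comp[OF realz_shear[OF mb] realz_coord] realz_shear[OF b]])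
  show ?thesis
    by (rule realz_cong[OF r]) (use bi in \<open>simp add: shear_def opsig_def indep_def\<close>)
qed

definition stepm :: "'n \<Rightarrow> real \<Rightarrow> (real^'n::finite \<Rightarrow> real) \<Rightarrow> real \<Rightarrow> real^'n \<Rightarrow> real^'n" where
  "stepm l t w s x = shear l w (opsig l (\<lambda>z. t + (-1) * w z) (1/s) (opsig l (\<lambda>z. t + (1/(s-1)) * w z) s x))"

lemma realz_stepm:
  assumes "w \<in> Hs l"
  shows "realz (stepm l t w s)"
proof -
  have b1: "(\<lambda>z. t + (1/(s-1)) * w z) \<in> Hs l" by (rule H_add[OF H_const H_scale[OF assms]])
  have b2: "(\<lambda>z. t + (-1) * w z) \<in> Hs l" by (rule H_add[OF H_const H_scale[OF assms]])
  have "realz (\<lambda>x. shear l w (opsig l (\<lambda>z. t + (-1) * w z) (1/s) (opsig l (\<lambda>z. t + (1/(s-1)) * w z) s x)))"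
    by (rule realz_comp[OF realz_comp[OF realz_opsig[OF b1] realz_opsig[OF b2]] realz_shear[OF assms]])
  then show ?thesis unfolding stepm_def[abs_def] .
qed

lemma step_real:
  fixes s \<eta> t u :: real
  assumes s: "s > 1" and e: "\<eta> > 0"
  shows "lrelu (1/s) (lrelu s (u - (t + \<eta>)) + (t + \<eta>) - (t - (s-1)*\<eta>)) + (t - (s-1)*\<eta>) + (s-1)*\<eta>
         = u + (s-1)*\<eta> * clamp01 ((u - t)/\<eta>)"
proof -
  consider "u \<ge> t + \<eta>" | "t \<le> u" "u < t + \<eta>" | "u < t" by linarith
  then show ?thesis
  proof cases
    case 1
    have c: "clamp01 ((u - t)/\<eta>) = 1" using 1 e by (intro clamp01_ge1) (simp add: field_simps)
    have "u - (t + \<eta>) \<ge> 0" using 1 by simp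
    moreover have "u - (t + \<eta>) + (t + \<eta>) - (t - (s-1)*\<eta>) \<ge> 0" using 1 s e by (simp add: algebra_simps) (smt (verit) mult_pos_pos)
    ultimately show ?thesis using c by simp
  next
    case 2
    have c: "clamp01 ((u - t)/\<eta>) = (u - t)/\<eta>" using 2 e unfolding clamp01_def by (simp add: field_simps)
    have neg: "u - (t + \<eta>) < 0" using 2 by simp
    then have l1: "lrelu s (u - (t + \<eta>)) = s * (u - (t + \<eta>))" by (simp add: lrelu_def)
    have eq: "s * (u - (t + \<eta>)) + (t + \<eta>) - (t - (s-1)*\<eta>) = s * (u - t)" by (simp add: algebra_simps)
    have "s * (u - t) \<ge> 0" using 2 s by simp
    then have lr: "lrelu (1/s) (s * (u - t)) = s * (u - t)" by simp
    have "s * (u - t) + (t - (s-1)*\<eta>) + (s-1)*\<eta> = u + (s-1)*\<eta> * ((u - t)/\<eta>)" using e by (simp add: field_simps)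
    then show ?thesis unfolding l1 eq c lr .
  next
    case 3
    have c: "clamp01 ((u - t)/\<eta>) = 0" using 3 e by (intro clamp01_le0) (simp add: divide_nonpos_pos)
    have neg: "u - (t + \<eta>) < 0" using 3 e by simp
    then have l1: "lrelu s (u - (t + \<eta>)) = s * (u - (t + \<eta>))" by (simp add: lrelu_def)
    have eq: "s * (u - (t + \<eta>)) + (t + \<eta>) - (t - (s-1)*\<eta>) = s * (u - t)" by (simp add: algebra_simps)
    have "s * (u - t) < 0" using 3 s by (simp add: mult_pos_neg)
    then have "lrelu (1/s) (s * (u - t)) = u - t" using s by (simp add: lrelu_def)
    then show ?thesis unfolding l1 eq c by simp
  qed
qed

lemma stepm_val:
  assumes wi: "indep l w" and s: "s > 1" and wx: "w x > 0"
  shows "stepm l t w s x = setc l x (x$l + w x * clamp01 ((x$l - t) / (w x / (s-1))))"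
proof -
  define \<eta> where "\<eta> = w x / (s - 1)"
  have e: "\<eta> > 0" unfolding \<eta>_def using s wx by simp
  have W: "w x = (s-1) * \<eta>" unfolding \<eta>_def using s by simp
  have wz: "w (setc l x v) = w x" for v using wi unfolding indep_def by simp
  define x1 where "x1 = setc l x (lrelu s (x$l - (t + \<eta>)) + (t + \<eta>))"
  have e1: "opsig l (\<lambda>z. t + (1/(s-1)) * w z) s x = x1" unfolding opsig_def x1_def \<eta>_def by simp
  define x2 where "x2 = setc l x (lrelu (1/s) (lrelu s (x$l - (t + \<eta>)) + (t + \<eta>) - (t - (s-1)*\<eta>)) + (t - (s-1)*\<eta>))"
  have e2: "opsig l (\<lambda>z. t + (-1) * w z) (1/s) x1 = x2" unfolding opsig_def x2_def x1_def by (simp add: wz W)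
  have e3: "shear l w x2 = setc l x (lrelu (1/s) (lrelu s (x$l - (t + \<eta>)) + (t + \<eta>) - (t - (s-1)*\<eta>)) + (t - (s-1)*\<eta>) + (s-1)*\<eta>)"
    unfolding shear_def x2_def by (simp add: wz W)
  have "stepm l t w s x = setc l x (lrelu (1/s) (lrelu s (x$l - (t + \<eta>)) + (t + \<eta>) - (t - (s-1)*\<eta>)) + (t - (s-1)*\<eta>) + (s-1)*\<eta>)"
    unfolding stepm_def e1 e2 e3 ..
  also have "\<dots> = setc l x (x$l + (s-1)*\<eta> * clamp01 ((x$l - t)/\<eta>))" by (simp only: step_real[OF s e])
  also have "(s-1)*\<eta> = w x" using W by simp
  finally show ?thesis unfolding \<eta>_def .
qed


primrec gstack :: "'n::finite \<Rightarrow> nat \<Rightarrow> (nat \<Rightarrow> real) \<Rightarrow> (nat \<Rightarrow> real^'n \<Rightarrow> real) \<Rightarrow> real \<Rightarrow> nat \<Rightarrow> real^'n \<Rightarrow> real^'n" where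
  "gstack l N p w s 0 = (\<lambda>x. x)"
| "gstack l N p w s (Suc n) = (\<lambda>x. stepm l (p (N - Suc n)) (w (N - Suc n)) s (gstack l N p w s n x))"

lemma realz_gstack:
  assumes "\<And>k. w k \<in> Hs l"
  shows "realz (gstack l N p w s n)"
proof (induction n)
  case 0 then show ?case using realz_id by simp
next
  case (Suc n)
  show ?case unfolding gstack.simps by (rule realz_comp[OF Suc realz_stepm[OF assms]])
qed

lemma gstack_val:
  assumes n: "n \<le> N" and wi: "\<And>k. indep l (w k)" and s: "s > 1" and wpos: "\<And>k. k < N \<Longrightarrow> w k x > 0"
    and D: "D > 0" and wD: "\<And>k. k < N \<Longrightarrow> w k x / (s-1) \<le> D" and p: "\<And>k. p k = p0 + real k * D"
  shows "gstack l N p w s n x = setc l x (x$l + (\<Sum>k\<in>{N-n..<N}. w k x * clamp01 ((x$l - p k) / (w k x / (s-1)))))"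
  using n
proof (induction n)
  case 0 then show ?case by simp
next
  case (Suc n)
  define m where "m = N - Suc n"
  have mN: "m < N" using Suc.prems unfolding m_def by simp
  have set: "{N - Suc n..<N} = insert m {N-n..<N}" "m \<notin> {N-n..<N}" unfolding m_def using Suc.prems by auto
  define u where "u = x$l"
  define S where "S = (\<Sum>k\<in>{N-n..<N}. w k x * clamp01 ((u - p k) / (w k x / (s-1))))"
  define \<eta> where "\<eta> = w m x / (s-1)"
  have eta: "\<eta> > 0" unfolding \<eta>_def using wpos[OF mN] s by simp
  have IH: "gstack l N p w s n x = setc l x (u + S)" using Suc unfolding S_def u_def by simp
  have wz: "w m (setc l x v) = w m x" for v using wi unfolding indep_def by simp
  have step: "gstack l N p w s (Suc n) x = setc l x (u + S + w m x * clamp01 ((u + S - p m) / \<eta>))"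
    unfolding gstack.simps m_def[symmetric] IH
    by (subst stepm_val[OF wi s]) (simp_all add: wz wpos[OF mN] \<eta>_def)
  have S0: "S \<ge> 0" unfolding S_def
  proof (rule sum_nonneg)
    fix k assume "k \<in> {N-n..<N}"
    then have "w k x > 0" using wpos by auto
    then show "0 \<le> w k x * clamp01 ((u - p k) / (w k x / (s-1)))" using clamp01_range by simp
  qed
  have sumins: "(\<Sum>k\<in>{N - Suc n..<N}. w k x * clamp01 ((u - p k) / (w k x / (s-1)))) = w m x * clamp01 ((u - p m) / \<eta>) + S"
    unfolding set(1) S_def \<eta>_def by (rule sum.insert) (use set(2) in auto)
  have cl: "clamp01 ((u + S - p m) / \<eta>) = clamp01 ((u - p m) / \<eta>)"
  proof (cases "u \<ge> p m + \<eta>")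
    case True
    then have "(u - p m) / \<eta> \<ge> 1" "(u + S - p m) / \<eta> \<ge> 1" using eta S0 by (simp_all add: field_simps)
    then show ?thesis by (simp add: clamp01_ge1)
  next
    case False
    have "w k x * clamp01 ((u - p k) / (w k x / (s-1))) = 0" if k: "k \<in> {N-n..<N}" for k
    proof -
      have "m < k" using k Suc.prems unfolding m_def by auto
      then have "real k \<ge> real m + 1" by simp
      then have "(real m + 1) * D \<le> real k * D" using D by (intro mult_right_mono) auto
      then have "p m + D \<le> p k" unfolding p by (simp add: algebra_simps)
      moreover have "\<eta> \<le> D" unfolding \<eta>_def using wD[OF mN] .
      ultimately have "u - p k \<le> 0" using False by linarith
      moreover have "w k x / (s-1) > 0" using wpos[of k] k s by simp
      ultimately have "(u - p k) / (w k x / (s-1)) \<le> 0" by (rule divide_nonpos_pos)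
      then show ?thesis by (simp only: clamp01_le0 mult_zero_right)
    qed
    then have "S = 0" unfolding S_def by (intro sum.neutral) blast
    then show ?thesis by simp
  qed
  show ?case unfolding step u_def[symmetric] cl sumins by (simp add: algebra_simps)
qed


lemma dist_setc: "dist (setc l x s) (setc l x t) \<le> \<bar>s - t\<bar>"
proof -
  have "dist (setc l x s) (setc l x t) = norm (setc l x s - setc l x t)" by (simp add: dist_norm)
  also have "\<dots> \<le> (\<Sum>i\<in>UNIV. \<bar>(setc l x s - setc l x t)$i\<bar>)" by (rule norm_le_l1_cart)
  also have "\<dots> = (\<Sum>i\<in>UNIV. if i = l then \<bar>s - t\<bar> else 0)" by (rule sum.cong) auto
  also have "\<dots> = \<bar>s - t\<bar>" by simp
  finally show ?thesis .
qed

lemma grid_sum: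
  fixes W \<eta> :: "nat \<Rightarrow> real"
  assumes j: "j < N" and p: "\<And>k. p k = p0 + real k * D" and eta: "\<And>k. k < N \<Longrightarrow> 0 < \<eta> k \<and> \<eta> k \<le> D"
    and u: "p j \<le> u" "u \<le> p (Suc j)"
  shows "(\<Sum>k<N. W k * clamp01 ((u - p k) / \<eta> k)) = (\<Sum>k<j. W k) + W j * clamp01 ((u - p j) / \<eta> j)"
proof (rule sum_split_at[OF j])
  fix k assume k: "k < j"
  then have "real k + 1 \<le> real j" by simp
  then have "(real k + 1) * D \<le> real j * D" using eta[of 0] j by (intro mult_right_mono) auto
  then have "p k + D \<le> p j" unfolding p by (simp add: algebra_simps)
  then have "u - p k \<ge> \<eta> k" using u eta[of k] k j by auto
  moreover have "\<eta> k > 0" using eta[of k] k j by auto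
  ultimately have "(u - p k) / \<eta> k \<ge> 1" by (simp add: field_simps)
  then show "W k * clamp01 ((u - p k) / \<eta> k) = W k" by (simp add: clamp01_ge1)
next
  fix k assume k: "j < k" "k < N"
  then have "real (Suc j) \<le> real k" by simp
  then have "real (Suc j) * D \<le> real k * D" using eta[of 0] j by (intro mult_right_mono) auto
  then have "u - p k \<le> 0" using u unfolding p by simp
  moreover have "\<eta> k > 0" using eta[of k] k by auto
  ultimately have "(u - p k) / \<eta> k \<le> 0" by (simp add: divide_nonpos_pos)
  then show "W k * clamp01 ((u - p k) / \<eta> k) = 0" by (simp add: clamp01_le0)
qed

lemma continuous_on_setc_pair: "continuous_on UNIV (\<lambda>p::(real^'n::finite) \<times> real. setc l (fst p) (snd p))"
  unfolding setc_def
proof (rule continuous_on_vec_lambda)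
  fix i show "continuous_on UNIV (\<lambda>p::(real^'n) \<times> real. if i = l then snd p else fst p $ i)"
    by (cases "i = l") (simp_all add: continuous_on_component continuous_on_fst continuous_on_snd continuous_on_id)
qed


lemma stair_approx:
  fixes f :: "real^'n::finite \<Rightarrow> real" and l :: 'n
  assumes K: "compact K" and fc: "continuous_on UNIV f"
    and mono: "\<And>x s t. s \<le> t \<Longrightarrow> f (setc l x s) \<le> f (setc l x t)" and e: "e > 0"
  shows "\<exists>g. realz g \<and> (\<forall>x\<in>K. \<forall>i. \<bar>setc l x (f x) $ i - g x $ i\<bar> < e)"
proof -
  obtain C where C: "C \<ge> 0" "\<And>x i. x \<in> K \<Longrightarrow> \<bar>x$i\<bar> \<le> C" using bounded_coords[OF K] by blast
  define R where "R = C + 1"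
  have R0: "R > 0" unfolding R_def using C by simp
  have RK: "-R \<le> x$l" "x$l \<le> R" if "x \<in> K" for x using C(2)[OF that, of l] unfolding R_def by auto
  define Kc where "Kc = (\<lambda>p. setc l (fst p) (snd p)) ` (K \<times> {-R..R})"
  have Kc: "compact Kc" unfolding Kc_def
    by (rule compact_continuous_image[OF continuous_on_subset[OF continuous_on_setc_pair]]) (auto intro: compact_Times K)
  have uc: "uniformly_continuous_on Kc f" by (rule compact_uniformly_continuous[OF continuous_on_subset[OF fc] Kc]) simp
  have e8: "e/8 > 0" using e by simp
  obtain d where d: "d > 0" and dd0: "\<forall>z\<in>Kc. \<forall>z'\<in>Kc. dist z' z < d \<longrightarrow> dist (f z') (f z) < e/8"
    using uc[unfolded uniformly_continuous_on_def, rule_format, OF e8] by (elim exE conjE)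
  have dd: "\<And>z z'. z \<in> Kc \<Longrightarrow> z' \<in> Kc \<Longrightarrow> dist z' z < d \<Longrightarrow> dist (f z') (f z) < e/8" using dd0 by blast
  have fuc: "\<bar>f (setc l x s) - f (setc l x t)\<bar> < e/8" if "x \<in> K" "-R \<le> s" "s \<le> R" "-R \<le> t" "t \<le> R" "\<bar>s - t\<bar> < d" for x s t
  proof -
    have "setc l x s \<in> Kc" unfolding Kc_def by (rule image_eqI[where x="(x, s)"]) (use that in auto)
    moreover have "setc l x t \<in> Kc" unfolding Kc_def by (rule image_eqI[where x="(x, t)"]) (use that in auto)
    moreover have "dist (setc l x s) (setc l x t) < d" using dist_setc[of l x s t] that by linarith
    ultimately show ?thesis using dd[of "setc l x t" "setc l x s"] by (simp add: dist_real_def)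
  qed
  define N where "N = nat \<lceil>2 * R / d\<rceil> + 1"
  have N0: "N > 0" unfolding N_def by simp
  have NR: "2 * R / d < real N" unfolding N_def by linarith
  define \<Delta> where "\<Delta> = 2 * R / real N"
  have D0: "\<Delta> > 0" unfolding \<Delta>_def using R0 N0 by simp
  have Dd: "\<Delta> < d" unfolding \<Delta>_def using NR d N0 by (simp add: field_simps)
  have ND: "- R + real N * \<Delta> = R" unfolding \<Delta>_def using N0 by simp
  define y where "y k = - R + real k * \<Delta>" for k
  have yR: "-R \<le> y k" "y k \<le> R" if "k \<le> N" for k
  proof -
    show "-R \<le> y k" unfolding y_def using D0 by simp
    have "real k * \<Delta> \<le> real N * \<Delta>" using that D0 by (intro mult_right_mono) auto
    then show "y k \<le> R" unfolding y_def using ND by linarith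
  qed
  have ySuc: "y (Suc k) = y k + \<Delta>" for k unfolding y_def by (simp add: algebra_simps)
  define w where "w k x = f (setc l x (y (Suc k))) - f (setc l x (y k))" for k x
  define v where "v x = f (setc l x (- R))" for x
  have fcomp: "continuous_on UNIV (\<lambda>x. f (setc l x c))" for c
    by (rule continuous_on_compose2[OF fc continuous_on_setc]) simp
  have wc: "continuous_on UNIV (\<lambda>x. w k x + \<gamma>)" for k \<gamma> unfolding w_def by (intro continuous_intros fcomp)
  have wi: "indep l (\<lambda>x. w k x + \<gamma>)" for k \<gamma> unfolding indep_def w_def by simp
  have vc: "continuous_on UNIV v" unfolding v_def by (rule fcomp)
  have vi: "indep l v" unfolding indep_def v_def by simp
  have w0: "0 \<le> w k x" for k x unfolding w_def using mono[of "y k" "y (Suc k)" x] D0 ySuc by simp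
  have wsmall: "w k x < e/8" if "x \<in> K" "k < N" for k x
  proof -
    have "\<bar>f (setc l x (y (Suc k))) - f (setc l x (y k))\<bar> < e/8"
      by (rule fuc) (use that yR[of k] yR[of "Suc k"] ySuc D0 Dd in auto)
    then show ?thesis unfolding w_def by linarith
  qed
  define \<gamma> where "\<gamma> = e / (8 * (real N + 2))"
  have g0: "\<gamma> > 0" unfolding \<gamma>_def using e by simp
  have "\<forall>k. \<exists>h. h \<in> Hs l \<and> (\<forall>x\<in>K. \<bar>(w k x + \<gamma>) - h x\<bar> < \<gamma>/2)"
    using H_dense[OF K wc wi] g0 by (meson half_gt_zero)
  then obtain W where W: "\<And>k. W k \<in> Hs l" "\<And>k x. x \<in> K \<Longrightarrow> \<bar>(w k x + \<gamma>) - W k x\<bar> < \<gamma>/2"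
    using choice[of "\<lambda>k h. h \<in> Hs l \<and> (\<forall>x\<in>K. \<bar>(w k x + \<gamma>) - h x\<bar> < \<gamma>/2)"] by blast
  obtain V where V: "V \<in> Hs l" "\<And>x. x \<in> K \<Longrightarrow> \<bar>v x - V x\<bar> < \<gamma>"
    using H_dense[OF K vc vi g0] by blast
  have Wi: "indep l (W k)" for k using W(1) unfolding Hs_def by auto
  have Vi: "indep l V" using V(1) unfolding Hs_def by auto
  define lam where "lam = e / (8 * R)"
  have lam0: "lam > 0" unfolding lam_def using e R0 by simp
  define D' where "D' = lam * \<Delta>"
  have D'0: "D' > 0" unfolding D'_def using lam0 D0 by simp
  define p where "p k = - lam * R + real k * D'" for k
  have py: "p k = lam * y k" for k unfolding p_def y_def D'_def by (simp add: algebra_simps)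
  define Wb where "Wb = e / 4"
  define s where "s = 2 + Wb / D'"
  have s1: "s > 1" unfolding s_def Wb_def using e D'0 by (simp add: add_pos_nonneg)
  define net where "net = (\<lambda>x. shear l V (gstack l N p W s N (setc l x (lam * x$l))))"
  have rnet: "realz net" unfolding net_def
    by (rule realz_comp[OF realz_comp[OF realz_setc_affl[OF affl_scale[OF affl_proj]] realz_gstack[OF W(1)]] realz_shear[OF V(1)]])
  have "\<bar>setc l x (f x) $ i - net x $ i\<bar> < e" if x: "x \<in> K" for x i
  proof -
    define yy where "yy = x$l"
    define z where "z = setc l x (lam * yy)"
    have Wz: "W k z = W k x" for k unfolding z_def using Wi unfolding indep_def by simp
    have Wlow: "W k x > w k x + \<gamma>/2" for k using W(2)[OF x, of k] by linarith
    have Wup: "W k x < w k x + 3 * \<gamma>/2" for k using W(2)[OF x, of k] by linarith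
    have Wpos: "W k x > 0" for k using Wlow[of k] w0[of k x] g0 by linarith
    have gN: "2 * \<gamma> \<le> e / 8" unfolding \<gamma>_def using e by (simp add: field_simps)
    have Wub: "W k x < Wb" if "k < N" for k using Wup[of k] wsmall[OF x that] gN g0 unfolding Wb_def by linarith
    have WD: "W k x / (s - 1) \<le> D'" if "k < N" for k
    proof -
      have "s - 1 = 1 + Wb / D'" unfolding s_def by simp
      then have "D' * (s - 1) = D' + Wb" using D'0 by (simp add: field_simps)
      then have "W k x \<le> D' * (s - 1)" using Wub[OF that] D'0 by linarith
      then show ?thesis using s1 by (simp add: field_simps)
    qed
    have gs: "gstack l N p W s N z = setc l z (z$l + (\<Sum>k\<in>{N-N..<N}. W k z * clamp01 ((z$l - p k) / (W k z / (s-1)))))"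
      by (rule gstack_val[OF order.refl Wi s1 _ D'0 _ p_def]) (simp_all add: Wz Wpos WD)
    have zl: "z$l = lam * yy" unfolding z_def by simp
    have netx: "net x = setc l x (lam * yy + (\<Sum>k<N. W k x * clamp01 ((lam * yy - p k) / (W k x / (s-1)))) + V x)"
      unfolding net_def yy_def[symmetric] z_def[symmetric] gs shear_def zl using Vi
      by (simp add: Wz Wz[unfolded z_def] indep_def atLeast0LessThan z_def)
    obtain j where j: "j < N" "-R + real j * \<Delta> \<le> yy" "yy \<le> -R + real (Suc j) * \<Delta>"
      using grid_locate[OF D0 N0, of "-R" yy] RK[OF x] ND unfolding yy_def by auto
    have pj: "p j \<le> lam * yy" "lam * yy \<le> p (Suc j)" unfolding py y_def using j lam0 by auto
    define \<theta> where "\<theta> = clamp01 ((lam * yy - p j) / (W j x / (s-1)))"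
    have th: "0 \<le> \<theta>" "\<theta> \<le> 1" unfolding \<theta>_def by (rule clamp01_range)+
    have sumeq: "(\<Sum>k<N. W k x * clamp01 ((lam * yy - p k) / (W k x / (s-1)))) = (\<Sum>k<j. W k x) + W j x * \<theta>"
      unfolding \<theta>_def
      by (rule grid_sum[OF j(1) p_def _ pj]) (use Wpos s1 WD in auto)
    define F where "F k = f (setc l x (y k))" for k
    have tel: "(\<Sum>k<j. w k x) = F j - F 0" unfolding w_def F_def by (rule sum_lessThan_telescope)
    have F0: "F 0 = v x" unfolding F_def v_def y_def by simp
    have fx: "f x = f (setc l x yy)" unfolding yy_def by simp
    have Fj: "F j \<le> f x" "f x \<le> F (Suc j)" unfolding fx F_def y_def using j by (auto intro: mono)
    have wj: "F (Suc j) - F j = w j x" unfolding F_def w_def by simp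
    have E2: "\<bar>(\<Sum>k<j. W k x) - (\<Sum>k<j. w k x)\<bar> \<le> real N * (2 * \<gamma>)"
    proof -
      have "\<bar>(\<Sum>k<j. W k x) - (\<Sum>k<j. w k x)\<bar> = \<bar>\<Sum>k<j. (W k x - w k x)\<bar>" by (simp add: sum_subtractf)
      also have "\<dots> \<le> (\<Sum>k<j. \<bar>W k x - w k x\<bar>)" by (rule sum_abs)
      also have "\<dots> \<le> (\<Sum>k<j. 2 * \<gamma>)"
      proof (rule sum_mono)
        fix k show "\<bar>W k x - w k x\<bar> \<le> 2 * \<gamma>" using Wlow[of k] Wup[of k] g0 by linarith
      qed
      also have "\<dots> = real j * (2 * \<gamma>)" by simp
      also have "\<dots> \<le> real N * (2 * \<gamma>)" using j g0 by (intro mult_right_mono) auto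
      finally show ?thesis .
    qed
    have E1: "\<bar>V x - v x\<bar> < \<gamma>" using V(2)[OF x] by linarith
    have E0: "\<bar>lam * yy\<bar> \<le> e / 8"
    proof -
      have "\<bar>lam * yy\<bar> = lam * \<bar>yy\<bar>" using lam0 by (simp add: abs_mult)
      also have "\<dots> \<le> lam * R" using RK[OF x] lam0 unfolding yy_def by (intro mult_left_mono) auto
      also have "\<dots> = e / 8" unfolding lam_def using R0 by simp
      finally show ?thesis .
    qed
    have T1: "W j x * \<theta> \<le> W j x" "0 \<le> W j x * \<theta>" using th Wpos[of j] by (auto simp: mult_left_le)
    have wjs: "w j x < e / 8" using wsmall[OF x j(1)] .
    have Wjs: "W j x < e / 8 + 2 * \<gamma>" using Wup[of j] wjs g0 by linarith
    have gam: "(2 * real N + 3) * \<gamma> < e / 4"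
    proof -
      have "(2 * real N + 3) * \<gamma> = e / 8 * ((2 * real N + 3) / (real N + 2))" unfolding \<gamma>_def by (simp add: field_simps)
      also have "\<dots> < e / 8 * 2"
        by (rule mult_strict_left_mono) (use e in \<open>simp_all add: field_simps\<close>)
      finally show ?thesis by simp
    qed
    have main: "\<bar>f x - (lam * yy + ((\<Sum>k<j. W k x) + W j x * \<theta>) + V x)\<bar> < e"
    proof -
      have a1: "-(e/8) \<le> lam * yy" "lam * yy \<le> e/8" using E0 by (simp_all add: abs_le_iff)
      have a2: "V x - v x < \<gamma>" "v x - V x < \<gamma>" using E1 by (simp_all add: abs_less_iff)
      have a3: "(\<Sum>k<j. W k x) - (F j - v x) \<le> 2 * (real N * \<gamma>)" "(F j - v x) - (\<Sum>k<j. W k x) \<le> 2 * (real N * \<gamma>)"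
        using E2 tel F0 by (simp_all add: abs_le_iff)
      have a4: "2 * (real N * \<gamma>) + 3 * \<gamma> < e / 4" using gam by (simp add: algebra_simps)
      show ?thesis unfolding abs_less_iff using a1 a2 a3 a4 T1 Wjs Fj wj wjs g0 e by linarith
    qed
    show ?thesis
    proof (cases "i = l")
      case True
      then show ?thesis unfolding netx sumeq using main by simp
    next
      case False
      then show ?thesis unfolding netx using e by simp
    qed
  qed
  then show ?thesis using rnet by blast
qed


lemma continuous_on_setc_v: "continuous_on UNIV (\<lambda>t. setc l x t)"
  unfolding setc_def
proof (rule continuous_on_vec_lambda)
  fix i show "continuous_on UNIV (\<lambda>t::real. if i = l then t else x $ i)"
    by (cases "i = l") (simp_all add: continuous_on_id)
qed

lemma tau_mono:
  fixes \<tau> :: "real^'n::{finite,linorder} \<Rightarrow> real^'n::{finite,linorder}"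
  assumes "\<tau> \<in> S_inf_c"
  obtains f where "continuous_on UNIV f" "\<And>x. \<tau> x = setc (Max UNIV) x (f x)"
    "\<And>x s t. s \<le> t \<Longrightarrow> f (setc (Max UNIV) x s) \<le> f (setc (Max UNIV) x t)"
proof -
  define l :: 'n where "l = Max UNIV"
  have bij: "bij \<tau>" using assms unfolding S_inf_c_def smooth_diffeo_def by blast
  then have inj: "inj \<tau>" by (rule bij_is_inj)
  obtain Kt where Kt: "compact Kt" "\<And>x. x \<notin> Kt \<Longrightarrow> \<tau> x = x"
    using assms unfolding S_inf_c_def compactly_supported_def by blast
  obtain f where fc: "continuous_on UNIV f" and tf0: "\<forall>x. \<tau> x = (\<chi> i. if i = Max UNIV then f x else x $ i)"
    using assms unfolding S_inf_c_def by blast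
  have tf: "\<tau> x = setc l x (f x)" for x using tf0 unfolding setc_def l_def by simp
  obtain B where B: "\<And>z. z \<in> Kt \<Longrightarrow> norm z \<le> B"
  proof -
    have "bounded Kt" using compact_imp_bounded[OF Kt(1)] .
    then obtain B where "\<forall>z\<in>Kt. norm z \<le> B" unfolding bounded_iff by (elim exE)
    then show ?thesis using that by blast
  qed
  have mono: "f (setc l x s) \<le> f (setc l x t)" if st: "s \<le> t" for x s t
  proof (rule ccontr)
    assume "\<not> ?thesis"
    then have lt: "f (setc l x t) < f (setc l x s)" by simp
    define g where "g r = f (setc l x r)" for r
    have gc: "continuous_on UNIV g" unfolding g_def by (rule continuous_on_compose2[OF fc continuous_on_setc_v]) simp
    have ginj: "r1 = r2" if "g r1 = g r2" for r1 r2
    proof -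
      have "\<tau> (setc l x r1) = \<tau> (setc l x r2)" using that unfolding tf g_def by simp
      then have "setc l x r1 = setc l x r2" using inj by (simp add: inj_eq)
      then show ?thesis by (metis setc_nth_same)
    qed
    have gbig: "g r = r" if "\<bar>r\<bar> > B" for r
    proof -
      have "setc l x r \<notin> Kt"
      proof
        assume "setc l x r \<in> Kt"
        then have "norm (setc l x r) \<le> B" by (rule B)
        moreover have "\<bar>setc l x r $ l\<bar> \<le> norm (setc l x r)" by (rule component_le_norm_cart)
        ultimately show False using that by simp
      qed
      then have "\<tau> (setc l x r) = setc l x r" by (rule Kt(2))
      then have "setc l x (g r) = setc l x r" unfolding tf g_def by simp
      then show ?thesis by (metis setc_nth_same)
    qed
    define T where "T = max B (max \<bar>t\<bar> \<bar>g s\<bar>) + 1"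
    have T: "\<bar>T\<bar> > B" "t \<le> T" "g s \<le> T" unfolding T_def by auto
    have gT: "g T = T" by (rule gbig[OF T(1)])
    obtain c where c: "t \<le> c" "c \<le> T" "g c = g s"
      using IVT'[of g t "g s" T] lt T gT continuous_on_subset[OF gc] unfolding g_def by force
    have "c = s" by (rule ginj) (use c in simp)
    then show False using c st lt unfolding g_def by (metis order.antisym order_less_irrefl)
  qed
  show ?thesis by (rule that[OF fc]) (use tf mono in \<open>simp_all add: l_def\<close>)
qed


theorem mainTheorem3:
  fixes \<tau> :: "real^'n::{finite,linorder} \<Rightarrow> real^'n::{finite,linorder}" and K :: "(real^'n::{finite,linorder}) set" and \<epsilon> :: real
  assumes "\<tau> \<in> S_inf_c" and "compact K" and "\<epsilon> > 0"
  shows "\<exists>g\<in>NN_LReLU. \<exists>\<delta> < \<epsilon>. \<forall>x\<in>K. \<forall>i. \<bar>\<tau> x $ i - g x $ i\<bar> \<le> \<delta>"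
proof -
  obtain f where fc: "continuous_on UNIV f" and tf: "\<And>x. \<tau> x = setc (Max UNIV) x (f x)"
    and mono: "\<And>x s t. s \<le> t \<Longrightarrow> f (setc (Max UNIV) x s) \<le> f (setc (Max UNIV) x t)"
    using tau_mono[OF assms(1)] by blast
  have e2: "\<epsilon> / 2 > 0" using assms(3) by simp
  obtain g where g: "realz g" "\<forall>x\<in>K. \<forall>i. \<bar>setc (Max UNIV) x (f x) $ i - g x $ i\<bar> < \<epsilon> / 2"
    using stair_approx[OF assms(2) fc mono e2] by blast
  obtain g' where g': "g' \<in> NN_LReLU" "\<forall>x\<in>K. g' x = g x" using g(1) assms(2) unfolding realz_def by blast
  show ?thesis
  proof (rule bexI[OF _ g'(1)], rule exI[of _ "\<epsilon> / 2"], intro conjI ballI allI)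
    show "\<epsilon> / 2 < \<epsilon>" using assms(3) by simp
  next
    fix x i assume x: "x \<in> K"
    have "\<bar>setc (Max UNIV) x (f x) $ i - g x $ i\<bar> < \<epsilon> / 2" using g(2) x by blast
    then show "\<bar>\<tau> x $ i - g' x $ i\<bar> \<le> \<epsilon> / 2" using g'(2) x tf[of x] by simp
  qed
qed

end
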